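(* Let $\kappa$ be an infinite cardinal and let $\alpha$ be an uncountable cardinal with $\alpha\leq\kappa^+$. Let $h:P(\kappa,\alpha)\to\mathbb{Z}$ be a group homomorphism. Then there are only finitely many $\xi\in\kappa$ such that $h(e_\xi)\neq0$.
   Context: $\mathbb{Z}^\kappa$ is the group of functions $x:\kappa\to\mathbb{Z}$ under pointwise addition, $\mathrm{supp}(x)=\{\xi\in\kappa:x(\xi)\neq0\}$, and $P(\kappa,\alpha)=\{x\in\mathbb{Z}^\kappa:|\mathrm{supp}(x)|<\alpha\}$. For $\xi\in\kappa$, $e_\xi\in P(\kappa,\alpha)$ is defined by $e_\xi(\xi)=1$ and $e_\xi(\eta)=0$ for $\eta\neq\xi$. *)

theory Defs
  imports Main "HOL-Library.Function_Algebras"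
begin

definition supp :: "('k \<Rightarrow> int) \<Rightarrow> 'k set" where
  "supp x = {\<xi>. x \<xi> \<noteq> 0}"

(* P(kappa, alpha) = {x. |supp x| < alpha}, kappa = UNIV :: 'k set,
   alpha a cardinal given as a cardinal order relation *)
definition Pset :: "'b rel \<Rightarrow> ('k \<Rightarrow> int) set" where
  "Pset alpha = {x. (card_of (supp x), alpha) \<in> ordLess}"

definition unitvec :: "'k \<Rightarrow> 'k \<Rightarrow> int" where
  "unitvec \<xi> = (\<lambda>\<eta>. if \<eta> = \<xi> then 1 else 0)"

end

theory Submission
  imports Defs "HOL-Library.Countable_Set_Type"
begin

lemma arith_step:
  fixes a t t' :: int
  assumes "a \<noteq> 0" "t = a + (2 * \<bar>a\<bar> + 2) * t'"
  shows "t \<noteq> 0 \<and> \<bar>t'\<bar> < \<bar>t\<bar>"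
proof (cases "t' = 0")
  case True then show ?thesis using assms by simp
next
  case False
  have "\<bar>(2 * \<bar>a\<bar> + 2) * t'\<bar> = (2 * \<bar>a\<bar> + 2) * \<bar>t'\<bar>"
    by (simp add: abs_mult)
  moreover have "(2 * \<bar>a\<bar> + 2) * \<bar>t'\<bar> \<ge> 2 * \<bar>a\<bar> + 2 * \<bar>t'\<bar>"
  proof -
    have "\<bar>t'\<bar> \<ge> 1" using False by linarith
    hence "\<bar>a\<bar> * \<bar>t'\<bar> \<ge> \<bar>a\<bar>" by (simp add: mult_le_cancel_left1)
    thus ?thesis by (simp add: algebra_simps)
  qed
  ultimately show ?thesis using assms False by linarith
qed

theorem mainTheorem7:
  fixes alpha :: "'b rel" and h :: "('k \<Rightarrow> int) \<Rightarrow> int"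
  assumes kappa_inf: "infinite (UNIV :: 'k set)"
    and alpha_card: "Card_order alpha"
    and alpha_uncountable: "(natLeq, alpha) \<in> ordLess"
    and alpha_le: "(alpha, cardSuc (card_of (UNIV :: 'k set))) \<in> ordLeq"
    and hom: "\<And>x y. x \<in> Pset alpha \<Longrightarrow> y \<in> Pset alpha \<Longrightarrow> h (x + y) = h x + h y"
  shows "finite {\<xi>. h (unitvec \<xi>) \<noteq> 0}"
proof (rule ccontr)
  assume inf: "infinite {\<xi>. h (unitvec \<xi>) \<noteq> 0}"
  have "\<exists>f::nat \<Rightarrow> 'k. inj f \<and> range f \<subseteq> {\<xi>. h (unitvec \<xi>) \<noteq> 0}"
    by (rule infinite_iff_countable_subset[THEN iffD1, OF inf])
  then obtain \<xi> :: "nat \<Rightarrow> 'k" where inj: "inj \<xi>" and rng: "range \<xi> \<subseteq> {\<xi>. h (unitvec \<xi>) \<noteq> 0}"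
    by blast
  have cnt: "x \<in> Pset alpha" if "countable (supp x)" for x
  proof -
    have "(card_of (supp x), natLeq) \<in> ordLeq" by (rule countable_card_le_natLeq[THEN iffD1, OF that])
    hence "(card_of (supp x), alpha) \<in> ordLess" by (rule ordLeq_ordLess_trans[OF _ alpha_uncountable])
    thus ?thesis unfolding Pset_def by simp
  qed
  define Q where "Q = {x :: 'k \<Rightarrow> int. countable (supp x)}"
  have QP: "x \<in> Q \<Longrightarrow> x \<in> Pset alpha" for x using cnt Q_def by blast
  have Qadd: "x \<in> Q \<Longrightarrow> y \<in> Q \<Longrightarrow> x + y \<in> Q" for x y
  proof -
    assume "x \<in> Q" "y \<in> Q"
    moreover have "supp (x + y) \<subseteq> supp x \<union> supp y" by (auto simp: supp_def)
    ultimately have "supp (x + y) \<subseteq> supp x \<union> supp y" "countable (supp x \<union> supp y)"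
      unfolding Q_def by simp_all
    hence "countable (supp (x + y))" by (rule countable_subset)
    thus ?thesis unfolding Q_def by simp
  qed
  have Qsc: "x \<in> Q \<Longrightarrow> (\<lambda>\<eta>. c * x \<eta>) \<in> Q" for x c
  proof -
    assume "x \<in> Q"
    moreover have "supp (\<lambda>\<eta>. c * x \<eta>) \<subseteq> supp x" by (auto simp: supp_def)
    ultimately have "countable (supp (\<lambda>\<eta>. c * x \<eta>))" unfolding Q_def
      using countable_subset by blast
    thus ?thesis unfolding Q_def by simp
  qed
  have h0: "h (\<lambda>_. 0) = 0"
  proof -
    have z: "(\<lambda>_. 0 :: int) \<in> Q" by (simp add: Q_def supp_def)
    have "h ((\<lambda>_. 0) + (\<lambda>_. 0)) = h (\<lambda>_. 0) + h (\<lambda>_. 0)" using hom QP z by blast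
    thus ?thesis by (simp add: plus_fun_def)
  qed
  have hsc: "x \<in> Q \<Longrightarrow> h (\<lambda>\<eta>. int k * x \<eta>) = int k * h x" for x k
  proof (induction k)
    case 0 then show ?case using h0 by simp
  next
    case (Suc k)
    have "(\<lambda>\<eta>. int (Suc k) * x \<eta>) = x + (\<lambda>\<eta>. int k * x \<eta>)"
      by (auto simp: plus_fun_def algebra_simps)
    moreover have "h (x + (\<lambda>\<eta>. int k * x \<eta>)) = h x + h (\<lambda>\<eta>. int k * x \<eta>)"
      using hom QP Qsc Suc.prems by blast
    ultimately show ?case using Suc by (simp add: algebra_simps)
  qed
  define a where "a n = h (unitvec (\<xi> n))" for n
  have anz: "a n \<noteq> 0" for n using rng a_def by auto
  define r :: "nat \<Rightarrow> nat" where "r n = 2 * nat \<bar>a n\<bar> + 2" for n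
  define P where "P N n = (\<Prod>i\<in>{N..<n}. int (r i))" for N n
  define tl where "tl N = (\<lambda>\<eta>. if \<exists>n\<ge>N. \<eta> = \<xi> n then P N (inv \<xi> \<eta>) else 0)" for N
  have tlQ: "tl N \<in> Q" for N
  proof -
    have "supp (tl N) \<subseteq> range \<xi>" by (auto simp: supp_def tl_def)
    hence "countable (supp (tl N))" by (rule countable_subset) simp
    thus ?thesis unfolding Q_def by simp
  qed
  have uQ: "unitvec k \<in> Q" for k
  proof -
    have "supp (unitvec k) \<subseteq> {k}" by (auto simp: supp_def unitvec_def)
    hence "countable (supp (unitvec k))" by (rule countable_subset) simp
    thus ?thesis unfolding Q_def by simp
  qed
  have rec: "tl N = unitvec (\<xi> N) + (\<lambda>\<eta>. int (r N) * tl (Suc N) \<eta>)" for N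
  proof
    fix \<eta>
    show "tl N \<eta> = (unitvec (\<xi> N) + (\<lambda>\<eta>. int (r N) * tl (Suc N) \<eta>)) \<eta>"
    proof (cases "\<exists>n\<ge>N. \<eta> = \<xi> n")
      case True
      then obtain n where n: "n \<ge> N" "\<eta> = \<xi> n" by blast
      have iv: "inv \<xi> \<eta> = n" using n inj by simp
      show ?thesis
      proof (cases "n = N")
        case True
        have "\<not> (\<exists>m\<ge>Suc N. \<eta> = \<xi> m)" using n True inj by (auto dest: injD)
        hence "tl (Suc N) \<eta> = 0" unfolding tl_def by (rule if_not_P)
        moreover have "tl N \<eta> = P N (inv \<xi> \<eta>)" unfolding tl_def using n by (intro if_P) blast
        moreover have "unitvec (\<xi> N) \<eta> = 1" unfolding unitvec_def using n True by simp
        ultimately show ?thesis using iv True by (simp add: P_def)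
      next
        case False
        hence "n \<ge> Suc N" using n by simp
        moreover have "\<eta> \<noteq> \<xi> N" using n False inj by (auto dest: injD)
        moreover have "P N n = int (r N) * P (Suc N) n" using \<open>n \<ge> Suc N\<close>
          unfolding P_def by (simp add: prod.atLeast_Suc_lessThan)
        ultimately have u: "unitvec (\<xi> N) \<eta> = 0" and pp: "P N n = int (r N) * P (Suc N) n"
          and sn: "n \<ge> Suc N" unfolding unitvec_def by simp_all
        have "tl (Suc N) \<eta> = P (Suc N) (inv \<xi> \<eta>)" unfolding tl_def using n sn by (intro if_P) blast
        moreover have "tl N \<eta> = P N (inv \<xi> \<eta>)" unfolding tl_def using n by (intro if_P) blast
        ultimately show ?thesis using iv u pp by simp
      qed
    next
      case False
      hence f1: "\<not> (\<exists>m\<ge>Suc N. \<eta> = \<xi> m)" and f2: "\<eta> \<noteq> \<xi> N" by auto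
      have "tl N \<eta> = 0" unfolding tl_def using False by (rule if_not_P)
      moreover have "tl (Suc N) \<eta> = 0" unfolding tl_def using f1 by (rule if_not_P)
      moreover have "unitvec (\<xi> N) \<eta> = 0" unfolding unitvec_def using f2 by simp
      ultimately show ?thesis by simp
    qed
  qed
  define t where "t N = h (tl N)" for N
  have trec: "t N = a N + (2 * \<bar>a N\<bar> + 2) * t (Suc N)" for N
  proof -
    have "t N = a N + h (\<lambda>\<eta>. int (r N) * tl (Suc N) \<eta>)"
    proof -
      have "h (tl N) = h (unitvec (\<xi> N) + (\<lambda>\<eta>. int (r N) * tl (Suc N) \<eta>))"
        by (rule arg_cong[where f=h, OF rec])
      also have "\<dots> = h (unitvec (\<xi> N)) + h (\<lambda>\<eta>. int (r N) * tl (Suc N) \<eta>)"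
        by (rule hom[OF QP[OF uQ] QP[OF Qsc[OF tlQ]]])
      finally show ?thesis unfolding t_def a_def .
    qed
    also have "\<dots> = a N + int (r N) * t (Suc N)" using hsc tlQ t_def by simp
    finally show ?thesis by (simp add: r_def)
  qed
  have dec: "\<bar>t (Suc N)\<bar> < \<bar>t N\<bar>" for N using arith_step[OF anz trec] by blast
  have "\<bar>t N\<bar> + int N \<le> \<bar>t 0\<bar>" for N
  proof (induction N)
    case (Suc N) then show ?case using dec[of N] by simp
  qed simp
  from this[of "nat \<bar>t 0\<bar> + 1"] show False by simp
qed

end
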